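(* Let $n$ be a positive integer and $G$ a graph. If $G\in\operatorname{obs}(P_n)$, then $G$ is a cycle, or $G$ is a linear forest (a disjoint union of paths), or $G$ is isomorphic to one of the graphs $A$, $B$, $E$.
   Context: All graphs are finite, simple and loopless. $P_n$ denotes the path on $n$ vertices ($P_1=K_1$, $P_2=K_2$). A full-homomorphism $\varphi\colon G\to H$ is a map $V(G)\to V(H)$ such that for all $x,y\in V(G)$, $xy\in E(G)$ if and only if $\varphi(x)\varphi(y)\in E(H)$. A full $H$-colouring of $G$ is a full-homomorphism $G\to H$. A minimal $H$-obstruction is a graph $G$ that admits no full $H$-colouring while every proper induced subgraph of $G$ admits one; $\operatorname{obs}(H)$ denotes the set of minimal $H$-obstructions (up to isomorphism). The graphs $A$, $B$, $E$ have vertex set $\{v_0,\dots,v_5\}$ and edge sets: $E(A)=\{v_0v_1,v_1v_2,v_2v_3,v_3v_4,v_4v_5,v_1v_4\}$; $E(B)=E(A)\cup\{v_0v_5\}$; $E(E)=\{v_0v_1,v_1v_2,v_0v_5,v_1v_4,v_2v_3\}$. *)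

theory Defs
  imports Main
begin

type_synonym 'a graph = "'a set \<times> 'a set set"

definition verts :: "'a graph \<Rightarrow> 'a set" where "verts G = fst G"
definition edges :: "'a graph \<Rightarrow> 'a set set" where "edges G = snd G"

definition wf_graph :: "'a graph \<Rightarrow> bool" where
  "wf_graph G \<longleftrightarrow> finite (verts G) \<and> (\<forall>e\<in>edges G. e \<subseteq> verts G \<and> card e = 2)"

definition induced_subgraph :: "'a graph \<Rightarrow> 'a set \<Rightarrow> 'a graph" where
  "induced_subgraph G S = (S, {e \<in> edges G. e \<subseteq> S})"

definition full_hom :: "'a graph \<Rightarrow> 'b graph \<Rightarrow> ('a \<Rightarrow> 'b) \<Rightarrow> bool" where
  "full_hom G H \<phi> \<longleftrightarrow> \<phi> ` verts G \<subseteq> verts H \<and>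
     (\<forall>x\<in>verts G. \<forall>y\<in>verts G. {x, y} \<in> edges G \<longleftrightarrow> {\<phi> x, \<phi> y} \<in> edges H)"

definition full_colourable :: "'a graph \<Rightarrow> 'b graph \<Rightarrow> bool" where
  "full_colourable G H \<longleftrightarrow> (\<exists>\<phi>. full_hom G H \<phi>)"

definition minimal_obstruction :: "'b graph \<Rightarrow> 'a graph \<Rightarrow> bool" where
  "minimal_obstruction H G \<longleftrightarrow> wf_graph G \<and> \<not> full_colourable G H \<and>
     (\<forall>S. S \<subset> verts G \<longrightarrow> full_colourable (induced_subgraph G S) H)"

definition path_graph :: "nat \<Rightarrow> nat graph" where
  "path_graph n = ({0..<n}, {{i, Suc i} | i. Suc i < n})"

definition graph_iso :: "'a graph \<Rightarrow> 'b graph \<Rightarrow> bool" where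
  "graph_iso G H \<longleftrightarrow> (\<exists>f. bij_betw f (verts G) (verts H) \<and>
     (\<forall>x\<in>verts G. \<forall>y\<in>verts G. {x, y} \<in> edges G \<longleftrightarrow> {f x, f y} \<in> edges H))"

definition is_cycle :: "'a graph \<Rightarrow> bool" where
  "is_cycle G \<longleftrightarrow> (\<exists>k f. k \<ge> 3 \<and> bij_betw f {0..<k} (verts G) \<and>
     edges G = {{f i, f ((Suc i) mod k)} | i. i < k})"

definition is_linear_forest :: "'a graph \<Rightarrow> bool" where
  "is_linear_forest G \<longleftrightarrow> (\<exists>ps :: 'a list list.
     distinct (concat ps) \<and> set (concat ps) = verts G \<and> (\<forall>p\<in>set ps. p \<noteq> []) \<and>
     edges G = (\<Union>p\<in>set ps. {{p ! i, p ! Suc i} | i. Suc i < length p}))"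

definition graph_A :: "nat graph" where
  "graph_A = ({0..5}, {{0,1},{1,2},{2,3},{3,4},{4,5},{1,4}})"
definition graph_B :: "nat graph" where
  "graph_B = ({0..5}, {{0,1},{1,2},{2,3},{3,4},{4,5},{1,4},{0,5}})"
definition graph_E :: "nat graph" where
  "graph_E = ({0..5}, {{0,1},{1,2},{0,5},{1,4},{2,3}})"

end

theory Submission
  imports Defs
begin


definition adj :: "'a graph \<Rightarrow> 'a \<Rightarrow> 'a \<Rightarrow> bool" where
  "adj G x y \<longleftrightarrow> {x, y} \<in> edges G"

lemma adj_sym: "adj G x y = adj G y x"
  by (simp add: adj_def insert_commute)

lemma adj_self: "wf_graph G \<Longrightarrow> \<not> adj G x x"
  by (auto simp: adj_def wf_graph_def)

lemma adj_verts: "wf_graph G \<Longrightarrow> adj G x y \<Longrightarrow> x \<in> verts G \<and> y \<in> verts G"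
  by (auto simp: adj_def wf_graph_def)

lemma path_edge_iff:
  assumes "a < n" "b < n"
  shows "{a, b} \<in> edges (path_graph n) \<longleftrightarrow> (b = Suc a \<or> a = Suc b)"
  using assms by (auto simp: path_graph_def edges_def doubleton_eq_iff)

lemma full_hom_iff:
  "full_hom (induced_subgraph G S) (path_graph n) \<phi> \<longleftrightarrow>
     \<phi> ` S \<subseteq> {0..<n} \<and> (\<forall>x\<in>S. \<forall>y\<in>S. adj G x y \<longleftrightarrow> (\<phi> y = Suc (\<phi> x) \<or> \<phi> x = Suc (\<phi> y)))"
proof
  assume h: "full_hom (induced_subgraph G S) (path_graph n) \<phi>"
  hence im: "\<phi> ` S \<subseteq> {0..<n}"
    by (simp add: full_hom_def induced_subgraph_def verts_def path_graph_def)
  show "\<phi> ` S \<subseteq> {0..<n} \<and> (\<forall>x\<in>S. \<forall>y\<in>S. adj G x y \<longleftrightarrow> (\<phi> y = Suc (\<phi> x) \<or> \<phi> x = Suc (\<phi> y)))"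
  proof (intro conjI im ballI)
    fix x y assume xy: "x \<in> S" "y \<in> S"
    have "\<phi> x < n" "\<phi> y < n" using im xy by auto
    then show "adj G x y \<longleftrightarrow> (\<phi> y = Suc (\<phi> x) \<or> \<phi> x = Suc (\<phi> y))"
      using h xy path_edge_iff[of "\<phi> x" n "\<phi> y"]
      by (auto simp: full_hom_def induced_subgraph_def verts_def edges_def adj_def)
  qed
next
  assume h: "\<phi> ` S \<subseteq> {0..<n} \<and> (\<forall>x\<in>S. \<forall>y\<in>S. adj G x y \<longleftrightarrow> (\<phi> y = Suc (\<phi> x) \<or> \<phi> x = Suc (\<phi> y)))"
  show "full_hom (induced_subgraph G S) (path_graph n) \<phi>"
    unfolding full_hom_def
  proof (intro conjI ballI)
    show "\<phi> ` verts (induced_subgraph G S) \<subseteq> verts (path_graph n)"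
      using h by (simp add: induced_subgraph_def verts_def path_graph_def)
    fix x y assume xy: "x \<in> verts (induced_subgraph G S)" "y \<in> verts (induced_subgraph G S)"
    hence xy': "x \<in> S" "y \<in> S" by (auto simp: induced_subgraph_def verts_def)
    have "\<phi> x < n" "\<phi> y < n" using h xy' by auto
    then show "({x, y} \<in> edges (induced_subgraph G S)) = ({\<phi> x, \<phi> y} \<in> edges (path_graph n))"
      using h xy' path_edge_iff[of "\<phi> x" n "\<phi> y"]
      by (auto simp: induced_subgraph_def verts_def edges_def adj_def)
  qed
qed

definition col :: "nat \<Rightarrow> 'a graph \<Rightarrow> 'a set \<Rightarrow> bool" where
  "col n G S \<longleftrightarrow> (\<exists>\<phi>. \<phi> ` S \<subseteq> {0..<n} \<and>
      (\<forall>x\<in>S. \<forall>y\<in>S. adj G x y \<longleftrightarrow> (\<phi> y = Suc (\<phi> x) \<or> \<phi> x = Suc (\<phi> y))))"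

lemma col_iff: "full_colourable (induced_subgraph G S) (path_graph n) = col n G S"
  by (simp add: full_colourable_def col_def full_hom_iff)

lemma induced_all: "wf_graph G \<Longrightarrow> induced_subgraph G (verts G) = G"
  by (cases G) (auto simp: induced_subgraph_def wf_graph_def verts_def edges_def)

lemma minobs_D:
  assumes "minimal_obstruction (path_graph n) G"
  shows "wf_graph G" "\<not> col n G (verts G)" "\<And>S. S \<subset> verts G \<Longrightarrow> col n G S"
  using assms by (auto simp: minimal_obstruction_def col_iff[symmetric] induced_all)

lemma col_odd3:
  assumes "col n G S" "x \<in> S" "y \<in> S" "z \<in> S" "adj G x y" "adj G y z" "adj G z x"
  shows False
proof -
  obtain \<phi> where h: "\<forall>x\<in>S. \<forall>y\<in>S. adj G x y \<longleftrightarrow> (\<phi> y = Suc (\<phi> x) \<or> \<phi> x = Suc (\<phi> y))"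
    using assms(1) by (auto simp: col_def)
  have "\<phi> y = Suc (\<phi> x) \<or> \<phi> x = Suc (\<phi> y)" "\<phi> z = Suc (\<phi> y) \<or> \<phi> y = Suc (\<phi> z)" "\<phi> x = Suc (\<phi> z) \<or> \<phi> z = Suc (\<phi> x)"
    using h assms(2-) by blast+
  then show False by linarith
qed

lemma col_odd5:
  assumes "col n G S" "x1 \<in> S" "x2 \<in> S" "x3 \<in> S" "x4 \<in> S" "x5 \<in> S"
   "adj G x1 x2" "adj G x2 x3" "adj G x3 x4" "adj G x4 x5" "adj G x5 x1"
  shows False
proof -
  obtain \<phi> where h: "\<forall>x\<in>S. \<forall>y\<in>S. adj G x y \<longleftrightarrow> (\<phi> y = Suc (\<phi> x) \<or> \<phi> x = Suc (\<phi> y))"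
    using assms(1) by (auto simp: col_def)
  have "\<phi> x2 = Suc (\<phi> x1) \<or> \<phi> x1 = Suc (\<phi> x2)" "\<phi> x3 = Suc (\<phi> x2) \<or> \<phi> x2 = Suc (\<phi> x3)"
    "\<phi> x4 = Suc (\<phi> x3) \<or> \<phi> x3 = Suc (\<phi> x4)" "\<phi> x5 = Suc (\<phi> x4) \<or> \<phi> x4 = Suc (\<phi> x5)"
    "\<phi> x1 = Suc (\<phi> x5) \<or> \<phi> x5 = Suc (\<phi> x1)"
    using h assms(2-) by blast+
  then show False by linarith
qed



lemma lt6: "(i::nat) < 6 \<longleftrightarrow> i = 0 \<or> i = 1 \<or> i=2 \<or> i=3 \<or> i=4 \<or> i=5" by auto
lemma all6: "(\<forall>i<(6::nat). P i) \<longleftrightarrow> P 0 \<and> P 1 \<and> P 2 \<and> P 3 \<and> P 4 \<and> P 5"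
  by (simp only: lt6 imp_disjL all_conj_distrib simp_thms)


lemma iso6:
  assumes V: "verts G = set xs" and d: "distinct xs" and l: "length xs = 6"
    and VH: "verts H = {0..5}"
    and h: "\<forall>i<6. \<forall>j<6. adj G (xs!i) (xs!j) = ({i,j} \<in> edges H)"
  shows "graph_iso G H"
proof -
  have b: "bij_betw ((!) xs) {..<6} (set xs)" by (rule bij_betw_nth) (use d l in auto)
  define f where "f = inv_into {..<6} ((!) xs)"
  have bf: "bij_betw f (set xs) {..<6}" unfolding f_def by (rule bij_betw_inv_into[OF b])
  have "{0..5::nat} = {..<6}" by auto
  hence VH': "verts H = {..<6}" using VH by simp
  have fx: "xs ! (f x) = x" if "x \<in> set xs" for x
    unfolding f_def by (rule bij_betw_inv_into_right[OF b that])
  have fl: "f x < 6" if "x \<in> set xs" for x using bij_betwE[OF bf] that by blast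
  show ?thesis unfolding graph_iso_def
  proof (intro exI conjI ballI)
    show "bij_betw f (verts G) (verts H)" unfolding V VH' by (rule bf)
    fix x y assume "x \<in> verts G" "y \<in> verts G"
    hence xy: "x \<in> set xs" "y \<in> set xs" using V by auto
    have "({x, y} \<in> edges G) = adj G (xs!(f x)) (xs!(f y))" by (simp add: adj_def fx xy)
    also have "\<dots> = ({f x, f y} \<in> edges H)" using h fl[OF xy(1)] fl[OF xy(2)] by blast
    finally show "({x, y} \<in> edges G) = ({f x, f y} \<in> edges H)" .
  qed
qed


lemma isoA:
  assumes wf: "wf_graph G" and V: "verts G = {x0,x1,x2,x3,x4,x5}" and d: "distinct [x0,x1,x2,x3,x4,x5]"
  and "adj G x0 x1" "adj G x1 x2" "adj G x2 x3" "adj G x3 x4" "adj G x4 x5" "adj G x1 x4"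
  and "\<not>adj G x0 x2" "\<not>adj G x0 x3" "\<not>adj G x0 x4" "\<not>adj G x0 x5" "\<not>adj G x1 x3" "\<not>adj G x1 x5"
     "\<not>adj G x2 x4" "\<not>adj G x2 x5" "\<not>adj G x3 x5"
  shows "graph_iso G graph_A"
proof (rule iso6[where xs="[x0,x1,x2,x3,x4,x5]"])
  show "\<forall>i<6. \<forall>j<6. adj G ([x0,x1,x2,x3,x4,x5]!i) ([x0,x1,x2,x3,x4,x5]!j) = ({i,j} \<in> edges graph_A)"
    unfolding all6 using assms(4-) adj_self[OF wf]
    by (simp add: graph_A_def edges_def adj_sym doubleton_eq_iff)
qed (use V d in \<open>simp_all add: graph_A_def verts_def\<close>)

lemma isoB:
  assumes wf: "wf_graph G" and V: "verts G = {x0,x1,x2,x3,x4,x5}" and d: "distinct [x0,x1,x2,x3,x4,x5]"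
  and "adj G x0 x1" "adj G x1 x2" "adj G x2 x3" "adj G x3 x4" "adj G x4 x5" "adj G x1 x4" "adj G x0 x5"
  and "\<not>adj G x0 x2" "\<not>adj G x0 x3" "\<not>adj G x0 x4" "\<not>adj G x1 x3" "\<not>adj G x1 x5"
     "\<not>adj G x2 x4" "\<not>adj G x2 x5" "\<not>adj G x3 x5"
  shows "graph_iso G graph_B"
proof (rule iso6[where xs="[x0,x1,x2,x3,x4,x5]"])
  show "\<forall>i<6. \<forall>j<6. adj G ([x0,x1,x2,x3,x4,x5]!i) ([x0,x1,x2,x3,x4,x5]!j) = ({i,j} \<in> edges graph_B)"
    unfolding all6 using assms(4-) adj_self[OF wf]
    by (simp add: graph_B_def edges_def adj_sym doubleton_eq_iff)
qed (use V d in \<open>simp_all add: graph_B_def verts_def\<close>)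

lemma isoE:
  assumes wf: "wf_graph G" and V: "verts G = {x0,x1,x2,x3,x4,x5}" and d: "distinct [x0,x1,x2,x3,x4,x5]"
  and "adj G x0 x1" "adj G x1 x2" "adj G x0 x5" "adj G x1 x4" "adj G x2 x3"
  and "\<not>adj G x0 x2" "\<not>adj G x0 x3" "\<not>adj G x0 x4" "\<not>adj G x1 x3" "\<not>adj G x1 x5"
     "\<not>adj G x2 x4" "\<not>adj G x2 x5" "\<not>adj G x3 x5" "\<not>adj G x3 x4" "\<not>adj G x4 x5"
  shows "graph_iso G graph_E"
proof (rule iso6[where xs="[x0,x1,x2,x3,x4,x5]"])
  show "\<forall>i<6. \<forall>j<6. adj G ([x0,x1,x2,x3,x4,x5]!i) ([x0,x1,x2,x3,x4,x5]!j) = ({i,j} \<in> edges graph_E)"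
    unfolding all6 using assms(4-) adj_self[OF wf]
    by (simp add: graph_E_def edges_def adj_sym doubleton_eq_iff)
qed (use V d in \<open>simp_all add: graph_E_def verts_def\<close>)



lemma six:
  fixes G :: "'a graph"
  assumes wf: "wf_graph G" and V: "verts G = {v,a,b,c,d,e}" and dist: "distinct [v,a,b,c,d,e]"
  and va: "adj G v a" and vb: "adj G v b" and vc: "adj G v c" and nvd: "\<not> adj G v d" and nve: "\<not> adj G v e"
  and nab: "\<not> adj G a b" and nac: "\<not> adj G a c" and nbc: "\<not> adj G b c"
  and tri: "\<And>x y z. x \<in> verts G \<Longrightarrow> y \<in> verts G \<Longrightarrow> z \<in> verts G \<Longrightarrow> adj G x y \<Longrightarrow> adj G y z \<Longrightarrow> adj G z x \<Longrightarrow> False"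
  and c5: "\<And>x1 x2 x3 x4 x5. x1 \<in> verts G \<Longrightarrow> x2 \<in> verts G \<Longrightarrow> x3 \<in> verts G \<Longrightarrow> x4 \<in> verts G \<Longrightarrow> x5 \<in> verts G \<Longrightarrow>
     adj G x1 x2 \<Longrightarrow> adj G x2 x3 \<Longrightarrow> adj G x3 x4 \<Longrightarrow> adj G x4 x5 \<Longrightarrow> adj G x5 x1 \<Longrightarrow> False"
  and pd: "\<And>x y. x \<in> verts G \<Longrightarrow> y \<in> verts G \<Longrightarrow> x \<noteq> y \<Longrightarrow> (\<forall>z\<in>verts G. adj G z x = adj G z y) \<Longrightarrow> False"
  and dab: "adj G d a \<noteq> adj G d b \<or> adj G e a \<noteq> adj G e b"
  and dac: "adj G d a \<noteq> adj G d c \<or> adj G e a \<noteq> adj G e c"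
  and dbc: "adj G d b \<noteq> adj G d c \<or> adj G e b \<noteq> adj G e c"
  shows "graph_iso G graph_A \<or> graph_iso G graph_B \<or> graph_iso G graph_E"
  apply (cases "adj G d a"; cases "adj G d b"; cases "adj G d c"; cases "adj G e a"; cases "adj G e b"; cases "adj G e c"; cases "adj G d e")
  subgoal using dab dac dbc by simp
  subgoal using dab dac dbc by simp
  subgoal using dab dac dbc by simp
  subgoal using dab dac dbc by simp
  subgoal using dab dac dbc by simp
  subgoal using dab dac dbc by simp
  subgoal using dab dac dbc by simp
  subgoal using dab dac dbc by simp
  subgoal using dab dac dbc by simp
  subgoal using dab dac dbc by simp
  subgoal using dab dac dbc by simp
  subgoal using dab dac dbc by simp
  subgoal using dab dac dbc by simp
  subgoal using dab dac dbc by simp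
  subgoal using dab dac dbc by simp
  subgoal using dab dac dbc by simp
  subgoal using dab dac dbc by simp
  subgoal using dab dac dbc by simp
  subgoal using dab dac dbc by simp
  subgoal using dab dac dbc by simp
  subgoal using tri[of a d e] va vb vc nvd nve nab nac nbc by (simp add: V adj_sym)
  subgoal apply (rule disjI2, rule disjI1, rule isoB[of G b v c e a d]) apply (rule wf) apply (simp add: V insert_commute) apply (use dist in auto) using va vb vc nvd nve nab nac nbc by (simp_all add: adj_sym)
  subgoal using tri[of a d e] va vb vc nvd nve nab nac nbc by (simp add: V adj_sym)
  subgoal apply (rule disjI1, rule isoA[of G c v b d a e]) apply (rule wf) apply (simp add: V insert_commute) apply (use dist in auto) using va vb vc nvd nve nab nac nbc by (simp_all add: adj_sym)
  subgoal using tri[of b d e] va vb vc nvd nve nab nac nbc by (simp add: V adj_sym)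
  subgoal apply (rule disjI2, rule disjI1, rule isoB[of G a v c e b d]) apply (rule wf) apply (simp add: V insert_commute) apply (use dist in auto) using va vb vc nvd nve nab nac nbc by (simp_all add: adj_sym)
  subgoal using tri[of b d e] va vb vc nvd nve nab nac nbc by (simp add: V adj_sym)
  subgoal apply (rule disjI1, rule isoA[of G c v a d b e]) apply (rule wf) apply (simp add: V insert_commute) apply (use dist in auto) using va vb vc nvd nve nab nac nbc by (simp_all add: adj_sym)
  subgoal using dab dac dbc by simp
  subgoal using dab dac dbc by simp
  subgoal using dab dac dbc by simp
  subgoal using dab dac dbc by simp
  subgoal using dab dac dbc by simp
  subgoal using dab dac dbc by simp
  subgoal using tri[of a d e] va vb vc nvd nve nab nac nbc by (simp add: V adj_sym)
  subgoal apply (rule disjI2, rule disjI1, rule isoB[of G b v c d a e]) apply (rule wf) apply (simp add: V insert_commute) apply (use dist in auto) using va vb vc nvd nve nab nac nbc by (simp_all add: adj_sym)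
  subgoal using dab dac dbc by simp
  subgoal using dab dac dbc by simp
  subgoal using tri[of a d e] va vb vc nvd nve nab nac nbc by (simp add: V adj_sym)
  subgoal apply (rule disjI1, rule isoA[of G b v c d a e]) apply (rule wf) apply (simp add: V insert_commute) apply (use dist in auto) using va vb vc nvd nve nab nac nbc by (simp_all add: adj_sym)
  subgoal using tri[of c d e] va vb vc nvd nve nab nac nbc by (simp add: V adj_sym)
  subgoal apply (rule disjI2, rule disjI1, rule isoB[of G a v b e c d]) apply (rule wf) apply (simp add: V insert_commute) apply (use dist in auto) using va vb vc nvd nve nab nac nbc by (simp_all add: adj_sym)
  subgoal using dab dac dbc by simp
  subgoal using dab dac dbc by simp
  subgoal using tri[of c d e] va vb vc nvd nve nab nac nbc by (simp add: V adj_sym)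
  subgoal apply (rule disjI1, rule isoA[of G b v a d c e]) apply (rule wf) apply (simp add: V insert_commute) apply (use dist in auto) using va vb vc nvd nve nab nac nbc by (simp_all add: adj_sym)
  subgoal using dab dac dbc by simp
  subgoal using dab dac dbc by simp
  subgoal using dab dac dbc by simp
  subgoal using dab dac dbc by simp
  subgoal using tri[of a d e] va vb vc nvd nve nab nac nbc by (simp add: V adj_sym)
  subgoal apply (rule disjI1, rule isoA[of G c v b e a d]) apply (rule wf) apply (simp add: V insert_commute) apply (use dist in auto) using va vb vc nvd nve nab nac nbc by (simp_all add: adj_sym)
  subgoal using tri[of a d e] va vb vc nvd nve nab nac nbc by (simp add: V adj_sym)
  subgoal apply (rule disjI1, rule isoA[of G b v c e a d]) apply (rule wf) apply (simp add: V insert_commute) apply (use dist in auto) using va vb vc nvd nve nab nac nbc by (simp_all add: adj_sym)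
  subgoal using dab dac dbc by simp
  subgoal using dab dac dbc by simp
  subgoal using dab dac dbc by simp
  subgoal using dab dac dbc by simp
  subgoal using c5[of v a d e b] va vb vc nvd nve nab nac nbc by (simp add: V adj_sym)
  subgoal apply (rule disjI2, rule disjI2, rule isoE[of G a v b e c d]) apply (rule wf) apply (simp add: V insert_commute) apply (use dist in auto) using va vb vc nvd nve nab nac nbc by (simp_all add: adj_sym)
  subgoal using c5[of v a d e c] va vb vc nvd nve nab nac nbc by (simp add: V adj_sym)
  subgoal apply (rule disjI2, rule disjI2, rule isoE[of G a v c e b d]) apply (rule wf) apply (simp add: V insert_commute) apply (use dist in auto) using va vb vc nvd nve nab nac nbc by (simp_all add: adj_sym)
  subgoal using dab dac dbc by simp
  subgoal using dab dac dbc by simp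
  subgoal using dab dac dbc by simp
  subgoal using dab dac dbc by simp
  subgoal using tri[of b d e] va vb vc nvd nve nab nac nbc by (simp add: V adj_sym)
  subgoal apply (rule disjI2, rule disjI1, rule isoB[of G a v c d b e]) apply (rule wf) apply (simp add: V insert_commute) apply (use dist in auto) using va vb vc nvd nve nab nac nbc by (simp_all add: adj_sym)
  subgoal using tri[of c d e] va vb vc nvd nve nab nac nbc by (simp add: V adj_sym)
  subgoal apply (rule disjI2, rule disjI1, rule isoB[of G a v b d c e]) apply (rule wf) apply (simp add: V insert_commute) apply (use dist in auto) using va vb vc nvd nve nab nac nbc by (simp_all add: adj_sym)
  subgoal using dab dac dbc by simp
  subgoal using dab dac dbc by simp
  subgoal using dab dac dbc by simp
  subgoal using dab dac dbc by simp
  subgoal using tri[of b d e] va vb vc nvd nve nab nac nbc by (simp add: V adj_sym)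
  subgoal apply (rule disjI1, rule isoA[of G a v c d b e]) apply (rule wf) apply (simp add: V insert_commute) apply (use dist in auto) using va vb vc nvd nve nab nac nbc by (simp_all add: adj_sym)
  subgoal using tri[of c d e] va vb vc nvd nve nab nac nbc by (simp add: V adj_sym)
  subgoal apply (rule disjI1, rule isoA[of G a v b d c e]) apply (rule wf) apply (simp add: V insert_commute) apply (use dist in auto) using va vb vc nvd nve nab nac nbc by (simp_all add: adj_sym)
  subgoal using dab dac dbc by simp
  subgoal using dab dac dbc by simp
  subgoal using dab dac dbc by simp
  subgoal using dab dac dbc by simp
  subgoal using tri[of b d e] va vb vc nvd nve nab nac nbc by (simp add: V adj_sym)
  subgoal apply (rule disjI1, rule isoA[of G c v a e b d]) apply (rule wf) apply (simp add: V insert_commute) apply (use dist in auto) using va vb vc nvd nve nab nac nbc by (simp_all add: adj_sym)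
  subgoal using dab dac dbc by simp
  subgoal using dab dac dbc by simp
  subgoal using c5[of v a e d b] va vb vc nvd nve nab nac nbc by (simp add: V adj_sym)
  subgoal apply (rule disjI2, rule disjI2, rule isoE[of G a v b d c e]) apply (rule wf) apply (simp add: V insert_commute) apply (use dist in auto) using va vb vc nvd nve nab nac nbc by (simp_all add: adj_sym)
  subgoal using tri[of b d e] va vb vc nvd nve nab nac nbc by (simp add: V adj_sym)
  subgoal apply (rule disjI1, rule isoA[of G a v c e b d]) apply (rule wf) apply (simp add: V insert_commute) apply (use dist in auto) using va vb vc nvd nve nab nac nbc by (simp_all add: adj_sym)
  subgoal using dab dac dbc by simp
  subgoal using dab dac dbc by simp
  subgoal using c5[of v b d e c] va vb vc nvd nve nab nac nbc by (simp add: V adj_sym)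
  subgoal apply (rule disjI2, rule disjI2, rule isoE[of G b v c e a d]) apply (rule wf) apply (simp add: V insert_commute) apply (use dist in auto) using va vb vc nvd nve nab nac nbc by (simp_all add: adj_sym)
  subgoal using dab dac dbc by simp
  subgoal using dab dac dbc by simp
  subgoal using dab dac dbc by simp
  subgoal using dab dac dbc by simp
  subgoal using dab dac dbc by simp
  subgoal using dab dac dbc by simp
  subgoal using tri[of c d e] va vb vc nvd nve nab nac nbc by (simp add: V adj_sym)
  subgoal apply (rule disjI1, rule isoA[of G b v a e c d]) apply (rule wf) apply (simp add: V insert_commute) apply (use dist in auto) using va vb vc nvd nve nab nac nbc by (simp_all add: adj_sym)
  subgoal using c5[of v a e d c] va vb vc nvd nve nab nac nbc by (simp add: V adj_sym)
  subgoal apply (rule disjI2, rule disjI2, rule isoE[of G a v c d b e]) apply (rule wf) apply (simp add: V insert_commute) apply (use dist in auto) using va vb vc nvd nve nab nac nbc by (simp_all add: adj_sym)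
  subgoal using tri[of c d e] va vb vc nvd nve nab nac nbc by (simp add: V adj_sym)
  subgoal apply (rule disjI1, rule isoA[of G a v b e c d]) apply (rule wf) apply (simp add: V insert_commute) apply (use dist in auto) using va vb vc nvd nve nab nac nbc by (simp_all add: adj_sym)
  subgoal using c5[of v b e d c] va vb vc nvd nve nab nac nbc by (simp add: V adj_sym)
  subgoal apply (rule disjI2, rule disjI2, rule isoE[of G b v c d a e]) apply (rule wf) apply (simp add: V insert_commute) apply (use dist in auto) using va vb vc nvd nve nab nac nbc by (simp_all add: adj_sym)
  subgoal using dab dac dbc by simp
  subgoal using dab dac dbc by simp
  subgoal using dab dac dbc by simp
  subgoal using dab dac dbc by simp
  subgoal using dab dac dbc by simp
  subgoal using dab dac dbc by simp
  subgoal using dab dac dbc by simp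
  subgoal using dab dac dbc by simp
  subgoal using dab dac dbc by simp
  subgoal using dab dac dbc by simp
  subgoal using dab dac dbc by simp
  subgoal using dab dac dbc by simp
  subgoal using dab dac dbc by simp
  subgoal using dab dac dbc by simp
  subgoal using dab dac dbc by simp
  subgoal using dab dac dbc by simp
  subgoal using dab dac dbc by simp
  subgoal using dab dac dbc by simp
  subgoal using dab dac dbc by simp
  subgoal using dab dac dbc by simp
  done



definition pairs :: "'a list \<Rightarrow> 'a set set" where
  "pairs p = {{p!i, p!Suc i} | i. Suc i < length p}"

lemma pairs_Nil[simp]: "pairs [] = {}" and pairs_single[simp]: "pairs [u] = {}"
  by (auto simp: pairs_def)

lemma pairs_Cons: "p \<noteq> [] \<Longrightarrow> pairs (u # p) = insert {u, hd p} (pairs p)"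
  unfolding pairs_def
proof (intro set_eqI iffI)
  fix e assume p: "p \<noteq> []" and "e \<in> {{(u # p) ! i, (u # p) ! Suc i} |i. Suc i < length (u # p)}"
  then obtain i where i: "e = {(u # p) ! i, (u # p) ! Suc i}" "Suc i < length (u # p)" by blast
  show "e \<in> insert {u, hd p} {{p ! i, p ! Suc i} |i. Suc i < length p}"
  proof (cases i)
    case 0 thus ?thesis using i p by (simp add: hd_conv_nth)
  next
    case (Suc j) thus ?thesis using i by auto
  qed
next
  fix e assume p: "p \<noteq> []" and "e \<in> insert {u, hd p} {{p ! i, p ! Suc i} |i. Suc i < length p}"
  then consider "e = {u, hd p}" | j where "e = {p ! j, p ! Suc j}" "Suc j < length p" by blast
  then show "e \<in> {{(u # p) ! i, (u # p) ! Suc i} |i. Suc i < length (u # p)}"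
  proof cases
    case 1 thus ?thesis using p by (intro CollectI exI[of _ 0]) (auto simp: hd_conv_nth)
  next
    case 2 thus ?thesis by (intro CollectI exI[of _ "Suc j"]) auto
  qed
qed

lemma pairs_snoc: "p \<noteq> [] \<Longrightarrow> pairs (p @ [u]) = insert {last p, u} (pairs p)"
  unfolding pairs_def
proof (intro set_eqI iffI)
  fix e assume p: "p \<noteq> []" and "e \<in> {{(p @ [u]) ! i, (p @ [u]) ! Suc i} |i. Suc i < length (p @ [u])}"
  then obtain i where i: "e = {(p @ [u]) ! i, (p @ [u]) ! Suc i}" "Suc i < length (p @ [u])" by blast
  show "e \<in> insert {last p, u} {{p ! i, p ! Suc i} |i. Suc i < length p}"
  proof (cases "Suc i < length p")
    case True thus ?thesis using i by (auto simp: nth_append)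
  next
    case False
    hence ii: "i = length p - 1" and "Suc i = length p" using i by simp_all
    hence "(p @ [u]) ! i = last p" "(p @ [u]) ! Suc i = u" using p by (simp_all add: nth_append last_conv_nth)
    thus ?thesis using i by simp
  qed
next
  fix e assume p: "p \<noteq> []" and "e \<in> insert {last p, u} {{p ! i, p ! Suc i} |i. Suc i < length p}"
  then consider "e = {last p, u}" | j where "e = {p ! j, p ! Suc j}" "Suc j < length p" by blast
  then show "e \<in> {{(p @ [u]) ! i, (p @ [u]) ! Suc i} |i. Suc i < length (p @ [u])}"
  proof cases
    case 1 thus ?thesis using p
      by (intro CollectI exI[of _ "length p - 1"]) (auto simp: nth_append last_conv_nth)
  next
    case 2 thus ?thesis by (intro CollectI exI[of _ j]) (auto simp: nth_append)
  qed
qed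

lemma pairs_mem: "Suc i < length p \<Longrightarrow> {p!i, p!Suc i} \<in> pairs p"
  by (auto simp: pairs_def)

lemma edge_2: "wf_graph G \<Longrightarrow> e \<in> edges G \<Longrightarrow> \<exists>x y. x \<noteq> y \<and> e = {x, y} \<and> adj G x y \<and> x \<in> verts G \<and> y \<in> verts G"
  unfolding wf_graph_def adj_def by (metis card_2_iff insert_subset)

lemma lf:
  assumes wf: "wf_graph G" and fin: "finite T" and TV: "T \<subseteq> verts G"
  and deg: "\<And>v x y z. adj G v x \<Longrightarrow> adj G v y \<Longrightarrow> adj G v z \<Longrightarrow> x = y \<or> x = z \<or> y = z"
  and low: "\<And>S. S \<subseteq> T \<Longrightarrow> S \<noteq> {} \<Longrightarrow> \<exists>u\<in>S. \<forall>y\<in>S. \<forall>z\<in>S. adj G u y \<longrightarrow> adj G u z \<longrightarrow> y = z"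
  shows "\<exists>ps. distinct (concat ps) \<and> set (concat ps) = T \<and> (\<forall>p\<in>set ps. p \<noteq> []) \<and>
           {e \<in> edges G. e \<subseteq> T} = (\<Union>p\<in>set ps. pairs p)"
  using fin TV low
proof (induction T rule: finite_psubset_induct)
  case (psubset T)
  show ?case
  proof (cases "T = {}")
    case True
    have "{e \<in> edges G. e \<subseteq> T} = {}" using True wf unfolding wf_graph_def by force
    thus ?thesis using True by (intro exI[of _ "[]"]) auto
  next
    case False
    then obtain u where uT: "u \<in> T" and ulow: "\<forall>y\<in>T. \<forall>z\<in>T. adj G u y \<longrightarrow> adj G u z \<longrightarrow> y = z"
      using psubset.prems(2)[of T] by blast
    define T' where "T' = T - {u}"
    have sub: "T' \<subset> T" using uT by (auto simp: T'_def)
    obtain ps where d: "distinct (concat ps)" and s: "set (concat ps) = T'" and ne: "\<forall>p\<in>set ps. p \<noteq> []"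
      and ed: "{e \<in> edges G. e \<subseteq> T'} = (\<Union>p\<in>set ps. pairs p)"
    proof -
      have a1: "T' \<subseteq> verts G" using sub psubset.prems(1) by blast
      have a2: "\<exists>u\<in>S. \<forall>y\<in>S. \<forall>z\<in>S. adj G u y \<longrightarrow> adj G u z \<longrightarrow> y = z" if "S \<subseteq> T'" "S \<noteq> {}" for S
        using psubset.prems(2)[of S] that sub by blast
      show ?thesis using psubset.IH[OF sub a1 a2] that by blast
    qed
    have uns: "u \<notin> set (concat ps)" using s by (simp add: T'_def)
    show ?thesis
    proof (cases "\<exists>w\<in>T. adj G u w")
      case False
      have "{e \<in> edges G. e \<subseteq> T} = {e \<in> edges G. e \<subseteq> T'}"
      proof (intro set_eqI iffI)
        fix e assume e: "e \<in> {e \<in> edges G. e \<subseteq> T}"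
        then obtain x y where xy: "x \<noteq> y" "e = {x,y}" "adj G x y" using edge_2[OF wf] by blast
        have "u \<noteq> x" "u \<noteq> y" using False xy e adj_sym by (metis CollectD insert_subset)+
        thus "e \<in> {e \<in> edges G. e \<subseteq> T'}" using e xy by (auto simp: T'_def)
      qed (auto simp: T'_def)
      thus ?thesis using d s ne ed uns uT
        by (intro exI[of _ "[u] # ps"]) (auto simp: T'_def)
    next
      case True
      then obtain w where wT: "w \<in> T" and uw: "adj G u w" by blast
      have wu: "w \<noteq> u" using uw adj_self[OF wf] by auto
      have ET: "{e \<in> edges G. e \<subseteq> T} = insert {u, w} {e \<in> edges G. e \<subseteq> T'}"
      proof (intro set_eqI iffI)
        fix e assume e: "e \<in> {e \<in> edges G. e \<subseteq> T}"
        then obtain x y where xy: "x \<noteq> y" "e = {x,y}" "adj G x y" using edge_2[OF wf] by blast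
        show "e \<in> insert {u, w} {e \<in> edges G. e \<subseteq> T'}"
        proof (cases "u \<in> e")
          case True
          then have "x = u \<and> y \<in> T \<or> y = u \<and> x \<in> T" using xy e by auto
          then have "e = {u, w}" using ulow wT uw xy adj_sym by (metis insert_commute)
          thus ?thesis by simp
        qed (use e in \<open>auto simp: T'_def\<close>)
      next
        fix e assume "e \<in> insert {u, w} {e \<in> edges G. e \<subseteq> T'}"
        thus "e \<in> {e \<in> edges G. e \<subseteq> T}" using uw uT wT by (auto simp: adj_def T'_def)
      qed
      have wT': "w \<in> set (concat ps)" using wT wu s by (auto simp: T'_def)
      then obtain p where pps: "p \<in> set ps" and wp: "w \<in> set p" by auto
      then obtain xs ys where split: "ps = xs @ p # ys" by (meson split_list)
      obtain i where i: "i < length p" "p ! i = w" using wp by (meson in_set_conv_nth)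
      have dp: "distinct p" using d pps by (simp add: distinct_concat_iff)
      have pne: "p \<noteq> []" using ne pps by blast
      have inT': "set p \<subseteq> T'" using s pps by auto
      have ends: "i = 0 \<or> i = length p - 1"
      proof (rule ccontr)
        assume "\<not> (i = 0 \<or> i = length p - 1)"
        hence i1: "0 < i" "Suc i < length p" using i by auto
        have e1: "{p!(i-1), p!Suc (i-1)} \<in> pairs p" using i1 by (intro pairs_mem) auto
        have e2: "{p!i, p!Suc i} \<in> pairs p" using i1 by (intro pairs_mem) auto
        have "{p!(i-1), w} \<in> edges G" "{w, p!Suc i} \<in> edges G"
          using e1 e2 ed pps i i1 by auto
        hence a1: "adj G w (p!(i-1))" "adj G w (p!Suc i)" by (auto simp: adj_def insert_commute)
        have "p!(i-1) \<noteq> p!Suc i" using dp i1 by (simp add: nth_eq_iff_index_eq)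
        moreover have "p!(i-1) \<in> set p" "p!Suc i \<in> set p" using i1 by auto
        hence "u \<noteq> p!(i-1)" "u \<noteq> p!Suc i" using inT' by (auto simp: T'_def)
        ultimately show False using deg[OF a1 uw[unfolded adj_sym[of G u w]]] by auto
      qed
      have cs: "concat ps = concat xs @ p @ concat ys" using split by simp
      show ?thesis
      proof (cases "i = 0")
        case True
        hence hw: "hd p = w" using i pne by (simp add: hd_conv_nth)
        show ?thesis
        proof (intro exI[of _ "xs @ (u # p) # ys"] conjI)
          show "distinct (concat (xs @ (u # p) # ys))" using d uns cs by auto
          show "set (concat (xs @ (u # p) # ys)) = T" using s uT cs by (auto simp: T'_def)
          show "\<forall>p\<in>set (xs @ (u # p) # ys). p \<noteq> []" using ne split by auto
          show "{e \<in> edges G. e \<subseteq> T} = (\<Union>p\<in>set (xs @ (u # p) # ys). pairs p)"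
            unfolding ET ed split using pairs_Cons[OF pne, of u] hw by auto
        qed
      next
        case False
        hence hw: "last p = w" using i pne ends by (simp add: last_conv_nth)
        show ?thesis
        proof (intro exI[of _ "xs @ (p @ [u]) # ys"] conjI)
          show "distinct (concat (xs @ (p @ [u]) # ys))" using d uns cs by auto
          show "set (concat (xs @ (p @ [u]) # ys)) = T" using s uT cs by (auto simp: T'_def)
          show "\<forall>p\<in>set (xs @ (p @ [u]) # ys). p \<noteq> []" using ne split by auto
          show "{e \<in> edges G. e \<subseteq> T} = (\<Union>p\<in>set (xs @ (p @ [u]) # ys). pairs p)"
            unfolding ET ed split using pairs_snoc[OF pne, of u] hw by (auto simp: insert_commute)
        qed
      qed
    qed
  qed
qed




lemma pd_lemma:
  assumes mo: "minimal_obstruction (path_graph n) G" and xV: "x \<in> verts G" and yV: "y \<in> verts G"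
    and xy: "x \<noteq> y" and tw: "\<forall>z\<in>verts G. adj G z x = adj G z y"
  shows False
proof -
  note D = minobs_D[OF mo]
  have "verts G - {y} \<subset> verts G" using yV by auto
  hence "col n G (verts G - {y})" by (rule D(3))
  then obtain \<phi> where im: "\<phi> ` (verts G - {y}) \<subseteq> {0..<n}"
    and h: "\<forall>u\<in>verts G - {y}. \<forall>w\<in>verts G - {y}. adj G u w \<longleftrightarrow> (\<phi> w = Suc (\<phi> u) \<or> \<phi> u = Suc (\<phi> w))"
    unfolding col_def by blast
  define \<psi> where "\<psi> = \<phi>(y := \<phi> x)"
  have key: "\<exists>u'\<in>verts G - {y}. \<psi> u = \<phi> u' \<and> (\<forall>w\<in>verts G. adj G u w = adj G u' w)"
    if "u \<in> verts G" for u
  proof (cases "u = y")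
    case True
    have "\<forall>w\<in>verts G. adj G u w = adj G x w" using tw True by (simp add: adj_sym)
    thus ?thesis using True xV xy by (intro bexI[of _ x]) (auto simp: \<psi>_def)
  next
    case False
    thus ?thesis using that by (intro bexI[of _ u]) (auto simp: \<psi>_def)
  qed
  have "col n G (verts G)" unfolding col_def
  proof (intro exI[of _ \<psi>] conjI ballI)
    show "\<psi> ` verts G \<subseteq> {0..<n}"
    proof
      fix t assume "t \<in> \<psi> ` verts G"
      then obtain u where "u \<in> verts G" "t = \<psi> u" by blast
      then obtain u' where "u' \<in> verts G - {y}" "t = \<phi> u'" using key by blast
      thus "t \<in> {0..<n}" using im by blast
    qed
    fix u w assume uw: "u \<in> verts G" "w \<in> verts G"
    obtain u' where u': "u' \<in> verts G - {y}" "\<psi> u = \<phi> u'" "\<forall>t\<in>verts G. adj G u t = adj G u' t"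
      using key uw by blast
    obtain w' where w': "w' \<in> verts G - {y}" "\<psi> w = \<phi> w'" "\<forall>t\<in>verts G. adj G w t = adj G w' t"
      using key uw by blast
    have "adj G u w = adj G u' w" using u' uw by blast
    also have "\<dots> = adj G w u'" by (rule adj_sym)
    also have "\<dots> = adj G w' u'" using w' u' by blast
    also have "\<dots> = adj G u' w'" by (rule adj_sym)
    also have "\<dots> = (\<phi> w' = Suc (\<phi> u') \<or> \<phi> u' = Suc (\<phi> w'))" using h u' w' by blast
    finally show "adj G u w = (\<psi> w = Suc (\<psi> u) \<or> \<psi> u = Suc (\<psi> w))" using u' w' by simp
  qed
  thus False using D(2) by blast
qed

lemma lowP:
  assumes mo: "minimal_obstruction (path_graph n) G"
    and deg: "\<And>v x y z. adj G v x \<Longrightarrow> adj G v y \<Longrightarrow> adj G v z \<Longrightarrow> x = y \<or> x = z \<or> y = z"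
    and SV: "S \<subset> verts G" and Sne: "S \<noteq> {}"
  shows "\<exists>u\<in>S. \<forall>y\<in>S. \<forall>z\<in>S. adj G u y \<longrightarrow> adj G u z \<longrightarrow> y = z"
proof -
  note D = minobs_D[OF mo]
  obtain \<phi> where h: "\<forall>u\<in>S. \<forall>w\<in>S. adj G u w \<longleftrightarrow> (\<phi> w = Suc (\<phi> u) \<or> \<phi> u = Suc (\<phi> w))"
    using D(3)[OF SV] unfolding col_def by blast
  have finS: "finite S" using D(1) SV unfolding wf_graph_def by (meson finite_subset psubset_imp_subset)
  have "Max (\<phi> ` S) \<in> \<phi> ` S" using finS Sne by (intro Max_in) auto
  then obtain u where uS: "u \<in> S" and um: "\<phi> u = Max (\<phi> ` S)" by auto
  have umax: "\<phi> w \<le> \<phi> u" if "w \<in> S" for w using um finS that by simp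
  show ?thesis
  proof (cases "\<forall>y\<in>S. \<forall>z\<in>S. adj G u y \<longrightarrow> adj G u z \<longrightarrow> y = z")
    case True thus ?thesis using uS by blast
  next
    case False
    then obtain p q where pq: "p \<in> S" "q \<in> S" "adj G u p" "adj G u q" "p \<noteq> q" by blast
    have "\<phi> p = Suc (\<phi> u) \<or> \<phi> u = Suc (\<phi> p)" using h uS pq(1,3) by blast
    hence "\<phi> u = Suc (\<phi> p)" using umax[OF pq(1)] by linarith
    moreover have "\<phi> q = Suc (\<phi> u) \<or> \<phi> u = Suc (\<phi> q)" using h uS pq(2,4) by blast
    hence "\<phi> u = Suc (\<phi> q)" using umax[OF pq(2)] by linarith
    ultimately have fpq: "\<phi> p = \<phi> q" by simp
    have "\<forall>y\<in>S. \<forall>z\<in>S. adj G p y \<longrightarrow> adj G p z \<longrightarrow> y = z"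
    proof (intro ballI impI, rule ccontr)
      fix y z assume yz: "y \<in> S" "z \<in> S" "adj G p y" "adj G p z" "y \<noteq> z"
      have "\<exists>r. r \<in> S \<and> adj G p r \<and> r \<noteq> u"
      proof (cases "y = u")
        case True thus ?thesis using yz by (intro exI[of _ z]) auto
      next
        case False thus ?thesis using yz by (intro exI[of _ y]) auto
      qed
      then obtain r where r: "r \<in> S" "adj G p r" "r \<noteq> u" by blast
      have qr: "adj G q r" using h pq r fpq by simp
      have SV': "S \<subseteq> verts G" using SV by blast
      have tw: "\<forall>z\<in>verts G. adj G z u = adj G z r"
      proof
        fix t assume "t \<in> verts G"
        show "adj G t u = adj G t r"
        proof
          assume "adj G t u"
          hence "t = p \<or> t = q" using deg[OF pq(3) pq(4), of t] pq(5) by (auto simp: adj_sym)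
          thus "adj G t r" using r qr by auto
        next
          assume "adj G t r"
          hence "t = p \<or> t = q" using deg[of r p q t] r qr pq(5) by (auto simp: adj_sym)
          thus "adj G t u" using pq by (auto simp: adj_sym)
        qed
      qed
      show False using pd_lemma[OF mo _ _ _ tw] uS r SV' by blast
    qed
    thus ?thesis using pq by blast
  qed
qed

lemma pos_unique:
  assumes "distinct (concat ps)" "p \<in> set ps" "q \<in> set ps" "i < length p" "j < length q" "p!i = q!j"
  shows "p = q \<and> i = j"
proof -
  have "p = q"
  proof (rule ccontr)
    assume "p \<noteq> q"
    hence "set p \<inter> set q = {}" using assms(1-3) by (simp add: distinct_concat_iff)
    thus False using assms(4-6) by (metis disjoint_iff nth_mem)
  qed
  moreover have "distinct p" using assms(1,2) by (simp add: distinct_concat_iff)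
  ultimately show ?thesis using assms(4-6) by (simp add: nth_eq_iff_index_eq)
qed

lemma cyc:
  assumes wf: "wf_graph G"
    and deg: "\<And>v x y z. adj G v x \<Longrightarrow> adj G v y \<Longrightarrow> adj G v z \<Longrightarrow> x = y \<or> x = z \<or> y = z"
    and two: "\<And>u. u \<in> verts G \<Longrightarrow> \<exists>y z. adj G u y \<and> adj G u z \<and> y \<noteq> z"
    and xV: "x \<in> verts G" and d: "distinct (concat ps)" and s: "set (concat ps) = verts G - {x}"
    and ne: "\<forall>p\<in>set ps. p \<noteq> []" and ed: "{e \<in> edges G. e \<subseteq> verts G - {x}} = (\<Union>p\<in>set ps. pairs p)"
  shows "is_cycle G"
proof -
  define T where "T = verts G - {x}"
  have Tnb: "\<exists>w\<in>T. adj G t w" if tT: "t \<in> T" for t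
  proof -
    obtain y z where yz: "adj G t y" "adj G t z" "y \<noteq> z" using two[of t] tT by (auto simp: T_def)
    have "y \<in> verts G" "z \<in> verts G" using yz adj_verts[OF wf] by blast+
    thus ?thesis using yz unfolding T_def by (cases "y = x") auto
  qed
  have qT: "set q \<subseteq> T" if "q \<in> set ps" for q using that s by (auto simp: T_def)
  have hdnb: "1 < length q \<and> w = q!1" if q: "q \<in> set ps" and w: "w \<in> T" and a: "adj G (q!0) w" for q w
  proof -
    have ql: "0 < length q" using ne q by blast
    have q0: "q!0 \<in> T" using qT[OF q] nth_mem[OF ql] by blast
    have "{q!0, w} \<in> {e \<in> edges G. e \<subseteq> T}" using a q0 w by (auto simp: adj_def)
    hence "{q!0, w} \<in> (\<Union>p\<in>set ps. pairs p)" using ed by (simp add: T_def)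
    then obtain r where "r \<in> set ps" "{q!0, w} \<in> pairs r" by blast
    then obtain j where r: "r \<in> set ps" "Suc j < length r" "{q!0, w} = {r!j, r!Suc j}"
      unfolding pairs_def by blast
    consider "q!0 = r!j" "w = r!Suc j" | "q!0 = r!Suc j" "w = r!j" using r(3) by (auto simp: doubleton_eq_iff)
    thus ?thesis
    proof cases
      case 1
      hence "q = r \<and> 0 = j" using pos_unique[OF d q r(1) ql _ 1(1)] r(2) by simp
      thus ?thesis using 1 r(2) by auto
    next
      case 2
      hence "q = r \<and> 0 = Suc j" using pos_unique[OF d q r(1) ql r(2) 2(1)] by simp
      thus ?thesis by simp
    qed
  qed
  have lastnb: "1 < length q \<and> w = q!(length q - 2)"
    if q: "q \<in> set ps" and w: "w \<in> T" and a: "adj G (q!(length q - 1)) w" for q w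
  proof -
    have ql: "length q - 1 < length q" using ne q by (simp add: Suc_leI)
    have q0: "q!(length q - 1) \<in> T" using qT[OF q] nth_mem[OF ql] by blast
    have "{q!(length q - 1), w} \<in> {e \<in> edges G. e \<subseteq> T}" using a q0 w by (auto simp: adj_def)
    hence "{q!(length q - 1), w} \<in> (\<Union>p\<in>set ps. pairs p)" using ed by (simp add: T_def)
    then obtain r where "r \<in> set ps" "{q!(length q - 1), w} \<in> pairs r" by blast
    then obtain j where r: "r \<in> set ps" "Suc j < length r" "{q!(length q - 1), w} = {r!j, r!Suc j}"
      unfolding pairs_def by blast
    consider "q!(length q - 1) = r!j" "w = r!Suc j" | "q!(length q - 1) = r!Suc j" "w = r!j"
      using r(3) by (auto simp: doubleton_eq_iff)
    thus ?thesis
    proof cases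
      case 1
      hence "q = r \<and> length q - 1 = j" using pos_unique[OF d q r(1) ql _ 1(1)] r(2) by (meson Suc_lessD)
      thus ?thesis using r(2) by auto
    next
      case 2
      hence "q = r \<and> length q - 1 = Suc j" using pos_unique[OF d q r(1) ql r(2) 2(1)] by blast
      hence "q = r" "j = length q - 2" "1 < length q" by auto
      thus ?thesis using 2 by simp
    qed
  qed
  have endx: "adj G x v" if v: "v \<in> T" and one: "\<And>w1 w2. w1 \<in> T \<Longrightarrow> w2 \<in> T \<Longrightarrow> adj G v w1 \<Longrightarrow> adj G v w2 \<Longrightarrow> w1 = w2" for v
  proof -
    obtain y z where yz: "adj G v y" "adj G v z" "y \<noteq> z" using two[of v] v by (auto simp: T_def)
    have "y \<in> verts G" "z \<in> verts G" using yz adj_verts[OF wf] by blast+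
    hence "y = x \<or> z = x" using one[of y z] yz by (auto simp: T_def)
    thus ?thesis using yz adj_sym by metis
  qed
  have qprops: "1 < length q \<and> adj G x (q!0) \<and> adj G x (q!(length q - 1))" if q: "q \<in> set ps" for q
  proof -
    have ql: "0 < length q" using ne q by blast
    have q0: "q!0 \<in> T" using qT[OF q] nth_mem[OF ql] by blast
    have ql1: "length q - 1 < length q" using ql by simp
    have q1: "q!(length q - 1) \<in> T" using qT[OF q] nth_mem[OF ql1] by blast
    have "1 < length q" using Tnb[OF q0] hdnb[OF q] by blast
    moreover have "adj G x (q!0)" using endx[OF q0] hdnb[OF q] by metis
    moreover have "adj G x (q!(length q - 1))" using endx[OF q1] lastnb[OF q] by metis
    ultimately show ?thesis by blast
  qed
  obtain y0 z0 where "adj G x y0" "adj G x z0" "y0 \<noteq> z0" using two xV by blast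
  hence "y0 \<in> T" using adj_verts[OF wf] adj_self[OF wf] by (auto simp: T_def)
  then obtain p where p: "p \<in> set ps" using s by (auto simp: T_def)
  define h where "h = p!0"
  define l where "l = p!(length p - 1)"
  have lp: "1 < length p" "adj G x h" "adj G x l" using qprops[OF p] by (auto simp: h_def l_def)
  have dp: "distinct p" using d p by (simp add: distinct_concat_iff)
  have hl0: "length p - 1 \<noteq> 0" "0 < length p" "length p - 1 < length p" using lp(1) by auto
  have hl: "h \<noteq> l" using nth_eq_iff_index_eq[OF dp hl0(2) hl0(3)] hl0(1) by (simp add: h_def l_def)
  have xnb: "w = h \<or> w = l" if "adj G x w" for w using deg[OF lp(2) lp(3) that] hl by auto
  have allp: "q = p" if q: "q \<in> set ps" for q
  proof -
    have ql: "0 < length q" using ne q by blast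
    have p0: "0 < length p" "length p - 1 < length p" using lp(1) by auto
    have "q!0 = p!0 \<or> q!0 = p!(length p - 1)" using xnb qprops[OF q] by (simp add: h_def l_def)
    thus ?thesis using pos_unique[OF d q p ql p0(1)] pos_unique[OF d q p ql p0(2)] by blast
  qed
  have sps: "set ps = {p}" using allp p by blast
  have "set (concat ps) = set p" using sps by simp
  hence Tp: "T = set p" using s by (simp add: T_def)
  have EP: "{e \<in> edges G. e \<subseteq> T} = pairs p" using ed sps by (simp add: T_def)
  have xp: "x \<notin> set p" unfolding Tp[symmetric] by (simp add: T_def)
  define k where "k = Suc (length p)"
  define f where "f = (\<lambda>i. (x # p) ! i)"
  show ?thesis unfolding is_cycle_def
  proof (intro exI[of _ k] exI[of _ f] conjI)
    show "3 \<le> k" using lp(1) by (simp add: k_def)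
    show "bij_betw f {0..<k} (verts G)" unfolding f_def
    proof (rule bij_betw_nth)
      show "distinct (x # p)" using dp xp by simp
      show "{0..<k} = {..<length (x # p)}" by (auto simp: k_def)
      show "verts G = set (x # p)" using Tp[symmetric] xV by (simp add: T_def insert_absorb)
    qed
    show "edges G = {{f i, f (Suc i mod k)} |i. i < k}"
    proof (intro set_eqI iffI)
      fix e assume e: "e \<in> edges G"
      then obtain s t where st: "s \<noteq> t" "e = {s,t}" "adj G s t" "s \<in> verts G" "t \<in> verts G"
        using edge_2[OF wf] by blast
      show "e \<in> {{f i, f (Suc i mod k)} |i. i < k}"
      proof (cases "s = x \<or> t = x")
        case False
        hence "e \<subseteq> T" using st by (auto simp: T_def)
        hence "e \<in> pairs p" using EP e by blast
        then obtain j where j: "e = {p!j, p!Suc j}" "Suc j < length p" by (auto simp: pairs_def)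
        have "e = {f (Suc j), f (Suc (Suc j) mod k)}" using j by (simp add: f_def k_def)
        thus ?thesis using j by (auto simp: k_def)
      next
        case True
        then obtain w where w: "adj G x w" "e = {x, w}" using st adj_sym by (metis insert_commute)
        from xnb[OF w(1)] show ?thesis
        proof
          assume "w = h"
          moreover have "Suc 0 mod k = Suc 0" using lp(1) unfolding k_def by (intro mod_less) linarith
          ultimately have "e = {f 0, f (Suc 0 mod k)}" using w lp(1) by (cases p) (simp_all add: f_def h_def)
          thus ?thesis by (auto simp: k_def)
        next
          assume "w = l"
          moreover have "f (length p) = l" using lp(1) by (cases p) (simp_all add: f_def l_def)
          moreover have "f (Suc (length p) mod k) = x" by (simp add: f_def k_def)
          ultimately have "e = {f (length p), f (Suc (length p) mod k)}" using w by (simp add: insert_commute)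
          thus ?thesis by (auto simp: k_def)
        qed
      qed
    next
      fix e assume "e \<in> {{f i, f (Suc i mod k)} |i. i < k}"
      then obtain i where i: "e = {f i, f (Suc i mod k)}" "i < k" by blast
      show "e \<in> edges G"
      proof (cases "Suc i < k")
        case True
        show ?thesis
        proof (cases i)
          case 0
          hence "e = {x, h}" using i True by (simp add: f_def h_def)
          thus ?thesis using lp(2) by (simp add: adj_def)
        next
          case (Suc j)
          hence "e = {p!j, p!Suc j}" "Suc j < length p" using i True by (simp_all add: f_def k_def)
          hence "e \<in> pairs p" using pairs_mem by blast
          thus ?thesis using EP by blast
        qed
      next
        case False
        hence "i = length p" using i by (simp add: k_def)
        moreover have "f (length p) = l" using lp(1) by (cases p) (simp_all add: f_def l_def)
        ultimately have "e = {l, x}" using i by (simp add: f_def k_def)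
        thus ?thesis using lp(3) by (simp add: adj_def insert_commute)
      qed
    qed
  qed
qed

lemma card_lt_proper: "finite V \<Longrightarrow> S \<subseteq> V \<Longrightarrow> card S < card V \<Longrightarrow> S \<subset> V"
  by auto

theorem lemma2p2:
  fixes n :: nat and G :: "'a graph"
  assumes "n \<ge> 1"
    and "minimal_obstruction (path_graph n) G"
  shows "is_cycle G \<or> is_linear_forest G \<or>
         graph_iso G graph_A \<or> graph_iso G graph_B \<or> graph_iso G graph_E"
proof -
  note mo = assms(2)
  note D = minobs_D[OF mo]
  have wf: "wf_graph G" by (rule D(1))
  have finV: "finite (verts G)" using wf by (simp add: wf_graph_def)
  have PD: "False" if "x \<in> verts G" "y \<in> verts G" "x \<noteq> y" "\<forall>z\<in>verts G. adj G z x = adj G z y" for x y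
    using pd_lemma[OF mo that] .
  have Vne: "verts G \<noteq> {}"
  proof
    assume "verts G = {}"
    hence "col n G (verts G)" unfolding col_def by simp
    thus False using D(2) by blast
  qed
  show ?thesis
  proof (cases "\<exists>v a b c. adj G v a \<and> adj G v b \<and> adj G v c \<and> a \<noteq> b \<and> a \<noteq> c \<and> b \<noteq> c")
    case True
    then obtain v a b c where vabc: "adj G v a" "adj G v b" "adj G v c" "a \<noteq> b" "a \<noteq> c" "b \<noteq> c" by blast
    have inV: "v \<in> verts G" "a \<in> verts G" "b \<in> verts G" "c \<in> verts G"
      using vabc adj_verts[OF wf] by blast+
    have nv: "v \<noteq> a" "v \<noteq> b" "v \<noteq> c" using vabc adj_self[OF wf] by blast+
    have "card {v,a,b,c} = 4" using vabc nv by simp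
    moreover have "card {v,a,b,c} \<le> card (verts G)" using inV finV by (intro card_mono) auto
    ultimately have c4: "4 \<le> card (verts G)" by simp
    have tri: False if "x \<in> verts G" "y \<in> verts G" "z \<in> verts G" "adj G x y" "adj G y z" "adj G z x" for x y z
    proof -
      have "card {x,y,z} \<le> 3" using card_length[of "[x,y,z]"] by simp
      hence "{x,y,z} \<subset> verts G" using c4 that(1-3) finV by (intro card_lt_proper) auto
      hence "col n G {x,y,z}" by (rule D(3))
      thus False using col_odd3[of n G "{x,y,z}" x y z] that by simp
    qed
    have nab: "\<not> adj G a b" using tri[of v a b] inV vabc adj_sym by metis
    have nac: "\<not> adj G a c" using tri[of v a c] inV vabc adj_sym by metis
    have nbc: "\<not> adj G b c" using tri[of v b c] inV vabc adj_sym by metis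
    have distg: "\<exists>z\<in>verts G. adj G z p \<noteq> adj G z q" if "p \<in> verts G" "q \<in> verts G" "p \<noteq> q" for p q
      using PD[OF that] by blast
    have nvz: "\<not> adj G v z" if z: "z \<in> verts G" "adj G z a \<or> adj G z b \<or> adj G z c" for z
    proof
      assume vz: "adj G v z"
      from z(2) show False
      proof (elim disjE)
        assume "adj G z a" thus False using tri[of v z a] z inV vz vabc adj_sym by metis
      next
        assume "adj G z b" thus False using tri[of v z b] z inV vz vabc adj_sym by metis
      next
        assume "adj G z c" thus False using tri[of v z c] z inV vz vabc adj_sym by metis
      qed
    qed
    obtain d where dV: "d \<in> verts G" and dd: "adj G d a \<noteq> adj G d b" using distg[OF inV(2,3) vabc(4)] by blast
    obtain e where eV: "e \<in> verts G"
      and dab: "adj G d a \<noteq> adj G d b \<or> adj G e a \<noteq> adj G e b"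
      and dac: "adj G d a \<noteq> adj G d c \<or> adj G e a \<noteq> adj G e c"
      and dbc: "adj G d b \<noteq> adj G d c \<or> adj G e b \<noteq> adj G e c"
      and ee: "adj G e a \<noteq> adj G e b \<or> adj G e a \<noteq> adj G e c \<or> adj G e b \<noteq> adj G e c"
    proof (cases "adj G d a \<noteq> adj G d c")
      case True
      obtain e where "e \<in> verts G" "adj G e b \<noteq> adj G e c" using distg[OF inV(3,4) vabc(6)] by blast
      thus ?thesis using that dd True by blast
    next
      case False
      obtain e where "e \<in> verts G" "adj G e a \<noteq> adj G e c" using distg[OF inV(2,4) vabc(5)] by blast
      thus ?thesis using that dd False by blast
    qed
    have adjd: "adj G d a \<or> adj G d b \<or> adj G d c" using dd by blast
    have adje: "adj G e a \<or> adj G e b \<or> adj G e c" using ee by blast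
    have nvd: "\<not> adj G v d" using nvz[OF dV adjd] .
    have nve: "\<not> adj G v e" using nvz[OF eV adje] .
    have sa: "adj G a a = False" "adj G b b = False" "adj G c c = False" using adj_self[OF wf] by blast+
    have dne: "d \<noteq> v" "d \<noteq> a" "d \<noteq> b" "d \<noteq> c"
      using dd vabc nab nac nbc sa by (auto simp: adj_sym)
    have ene: "e \<noteq> v" "e \<noteq> a" "e \<noteq> b" "e \<noteq> c"
      using ee vabc nab nac nbc sa by (auto simp: adj_sym)
    have de: "d \<noteq> e" using dab dac dbc by blast
    have dist6: "distinct [v,a,b,c,d,e]" using nv vabc dne ene de by auto
    define S where "S = {v,a,b,c,d,e}"
    have SV: "S \<subseteq> verts G" using inV dV eV by (auto simp: S_def)
    have SeqV: "S = verts G"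
    proof (rule ccontr)
      assume "S \<noteq> verts G"
      hence "S \<subset> verts G" using SV by blast
      hence "col n G S" by (rule D(3))
      then obtain \<phi> where h: "\<forall>x\<in>S. \<forall>y\<in>S. adj G x y \<longleftrightarrow> (\<phi> y = Suc (\<phi> x) \<or> \<phi> x = Suc (\<phi> y))"
        unfolding col_def by blast
      have hh: "adj G x y \<longleftrightarrow> (\<phi> y = Suc (\<phi> x) \<or> \<phi> x = Suc (\<phi> y))" if "x \<in> S" "y \<in> S" for x y
        using h that by blast
      have mem: "v \<in> S" "a \<in> S" "b \<in> S" "c \<in> S" "d \<in> S" "e \<in> S" by (simp_all add: S_def)
      have fa: "\<phi> a = Suc (\<phi> v) \<or> \<phi> v = Suc (\<phi> a)" using hh[OF mem(1,2)] vabc by simp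
      have fb: "\<phi> b = Suc (\<phi> v) \<or> \<phi> v = Suc (\<phi> b)" using hh[OF mem(1,3)] vabc by simp
      have fc: "\<phi> c = Suc (\<phi> v) \<or> \<phi> v = Suc (\<phi> c)" using hh[OF mem(1,4)] vabc by simp
      have "\<phi> a = \<phi> b \<or> \<phi> a = \<phi> c \<or> \<phi> b = \<phi> c" using fa fb fc by auto
      thus False
      proof (elim disjE)
        assume eq: "\<phi> a = \<phi> b"
        have "adj G d a = adj G d b" "adj G e a = adj G e b"
          using hh[OF mem(5) mem(2)] hh[OF mem(5) mem(3)] hh[OF mem(6) mem(2)] hh[OF mem(6) mem(3)] eq by simp_all
        thus False using dab by simp
      next
        assume eq: "\<phi> a = \<phi> c"
        have "adj G d a = adj G d c" "adj G e a = adj G e c"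
          using hh[OF mem(5) mem(2)] hh[OF mem(5) mem(4)] hh[OF mem(6) mem(2)] hh[OF mem(6) mem(4)] eq by simp_all
        thus False using dac by simp
      next
        assume eq: "\<phi> b = \<phi> c"
        have "adj G d b = adj G d c" "adj G e b = adj G e c"
          using hh[OF mem(5) mem(3)] hh[OF mem(5) mem(4)] hh[OF mem(6) mem(3)] hh[OF mem(6) mem(4)] eq by simp_all
        thus False using dbc by simp
      qed
    qed
    have V6: "verts G = {v,a,b,c,d,e}" using SeqV by (simp add: S_def)
    have c6: "card (verts G) = 6" unfolding V6 using distinct_card[OF dist6] by simp
    have c5: False if "x1 \<in> verts G" "x2 \<in> verts G" "x3 \<in> verts G" "x4 \<in> verts G" "x5 \<in> verts G"
      "adj G x1 x2" "adj G x2 x3" "adj G x3 x4" "adj G x4 x5" "adj G x5 x1" for x1 x2 x3 x4 x5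
    proof -
      have "card {x1,x2,x3,x4,x5} \<le> 5" using card_length[of "[x1,x2,x3,x4,x5]"] by simp
      hence "{x1,x2,x3,x4,x5} \<subset> verts G" using c6 that(1-5) finV by (intro card_lt_proper) auto
      hence "col n G {x1,x2,x3,x4,x5}" by (rule D(3))
      thus False using col_odd5[of n G "{x1,x2,x3,x4,x5}" x1 x2 x3 x4 x5] that by simp
    qed
    have "graph_iso G graph_A \<or> graph_iso G graph_B \<or> graph_iso G graph_E"
      by (rule six[OF wf V6 dist6 vabc(1-3) nvd nve nab nac nbc tri c5 PD dab dac dbc])
    thus ?thesis by blast
  next
    case False
    have deg: "x = y \<or> x = z \<or> y = z" if "adj G v x" "adj G v y" "adj G v z" for v x y z
      using False that by blast
    show ?thesis
    proof (cases "\<exists>u\<in>verts G. \<forall>y\<in>verts G. \<forall>z\<in>verts G. adj G u y \<longrightarrow> adj G u z \<longrightarrow> y = z")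
      case True
      have low: "\<exists>u\<in>S. \<forall>y\<in>S. \<forall>z\<in>S. adj G u y \<longrightarrow> adj G u z \<longrightarrow> y = z"
        if SS: "S \<subseteq> verts G" and Sne: "S \<noteq> {}" for S
      proof (cases "S = verts G")
        case True thus ?thesis using \<open>\<exists>u\<in>verts G. _\<close> by simp
      next
        case False
        hence SV: "S \<subset> verts G" using SS by blast
        show ?thesis by (rule lowP[OF mo _ SV Sne]) (rule deg, assumption+)
      qed
      obtain ps where ps: "distinct (concat ps)" "set (concat ps) = verts G" "\<forall>p\<in>set ps. p \<noteq> []"
        "{e \<in> edges G. e \<subseteq> verts G} = (\<Union>p\<in>set ps. pairs p)"
        apply (rule lf[OF wf finV order.refl, THEN exE])
          apply (rule deg; assumption)
         apply (rule low; assumption)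
        by blast
      have "edges G = {e \<in> edges G. e \<subseteq> verts G}" using wf by (auto simp: wf_graph_def)
      hence E: "edges G = (\<Union>p\<in>set ps. pairs p)" using ps(4) by simp
      have "is_linear_forest G" unfolding is_linear_forest_def
        by (rule exI[of _ ps]) (use ps(1-3) E in \<open>simp add: pairs_def\<close>)
      thus ?thesis by blast
    next
      case False
      have two: "\<exists>y z. adj G u y \<and> adj G u z \<and> y \<noteq> z" if "u \<in> verts G" for u
        using False that by blast
      obtain x where xV: "x \<in> verts G" using Vne by blast
      have low: "\<exists>u\<in>S. \<forall>y\<in>S. \<forall>z\<in>S. adj G u y \<longrightarrow> adj G u z \<longrightarrow> y = z"
        if SS: "S \<subseteq> verts G - {x}" and Sne: "S \<noteq> {}" for S
      proof -
        have SV: "S \<subset> verts G" using SS xV by blast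
        show ?thesis by (rule lowP[OF mo _ SV Sne]) (rule deg, assumption+)
      qed
      have fT: "finite (verts G - {x})" using finV by simp
      obtain ps where ps: "distinct (concat ps)" "set (concat ps) = verts G - {x}" "\<forall>p\<in>set ps. p \<noteq> []"
        "{e \<in> edges G. e \<subseteq> verts G - {x}} = (\<Union>p\<in>set ps. pairs p)"
        apply (rule lf[OF wf fT Diff_subset, THEN exE])
          apply (rule deg; assumption)
         apply (rule low; assumption)
        by blast
      have "is_cycle G" by (rule cyc[OF wf _ two xV ps]) (rule deg, assumption+)
      thus ?thesis by blast
    qed
  qed
qed


end
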